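(* Let $m \ge 1$ and $n \ge 2m+1$ be integers. Then for every real $r$ with $|r|<1$, $$\int_{-1}^1 \frac{T_n(s)(1-s^2)^{m-\frac{1}{2}}}{(s-r)^2}\,ds = \pi(-1)^{m+1}\left(\frac{1}{2}\right)^{2m-1}\sum_{j=0}^{2m-1}(-1)^j\binom{2m-1}{j}(n+1-2m+2j)\,U_{n-2m+2j}(r),$$ where the integral is a Hadamard finite-part integral.
   Context: $T_k(s)=\cos(k\cos^{-1}s)$ and $U_k(s)=\frac{\sin((k+1)\cos^{-1}s)}{\sin(\cos^{-1}s)}$ are the Tchebyshev polynomials of the first and second kinds. For a positive integer $\alpha\ge 2$ and $|r|<1$, the integral $\int_{-1}^1 \frac{D(s)}{(s-r)^\alpha}ds$ is understood in the Hadamard finite-part sense; in particular it satisfies $\int_{-1}^1 \frac{D(s)}{(s-r)^{\alpha}}ds=\frac{1}{\alpha-1}\frac{d}{dr}\int_{-1}^1\frac{D(s)}{(s-r)^{\alpha-1}}ds$, where for $\alpha-1=1$ the right-hand integral is a Cauchy principal value. $\binom{a}{j}=\frac{a!}{j!(a-j)!}$. *)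

theory Defs
  imports "HOL-Analysis.Analysis"
begin

definition chebT :: "nat \<Rightarrow> real \<Rightarrow> real" where
  "chebT k s = cos (real k * arccos s)"

definition chebU :: "nat \<Rightarrow> real \<Rightarrow> real" where
  "chebU k s = sin (real (k + 1) * arccos s) / sin (arccos s)"

definition has_cpv_integral :: "(real \<Rightarrow> real) \<Rightarrow> real \<Rightarrow> real \<Rightarrow> bool" where
  "has_cpv_integral D r I \<longleftrightarrow>
     ((\<lambda>\<epsilon>. integral {-1..r-\<epsilon>} (\<lambda>s. D s / (s - r))
          + integral {r+\<epsilon>..1} (\<lambda>s. D s / (s - r))) \<longlongrightarrow> I) (at_right 0)"

text \<open>Hadamard finite-part integral of D(s)/(s-r)^2 over [-1,1] (|r|<1):
  the derivative in r of the principal-value integral of D(s)/(s-r).\<close>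
definition has_hadamard2_integral :: "(real \<Rightarrow> real) \<Rightarrow> real \<Rightarrow> real \<Rightarrow> bool" where
  "has_hadamard2_integral D r J \<longleftrightarrow>
     (\<exists>P. (\<forall>t\<in>{-1<..<1}. has_cpv_integral D t (P t)) \<and> (P has_real_derivative J) (at r))"

end

theory Submission
  imports Defs
begin

lemma cpv_cong:
  assumes "\<And>s. s \<in> {-1..1} \<Longrightarrow> f s = g s" "has_cpv_integral f t I" "\<bar>t\<bar> < 1"
  shows "has_cpv_integral g t I"
proof -
  have "\<And>e. e > 0 \<Longrightarrow> integral {-1..t-e} (\<lambda>s. f s / (s - t)) = integral {-1..t-e} (\<lambda>s. g s / (s - t))"
    by (rule integral_cong) (use assms(1,3) in auto)
  moreover have "\<And>e. e > 0 \<Longrightarrow> integral {t+e..1} (\<lambda>s. f s / (s - t)) = integral {t+e..1} (\<lambda>s. g s / (s - t))"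
    by (rule integral_cong) (use assms(1,3) in auto)
  ultimately show ?thesis using assms(2) unfolding has_cpv_integral_def
    apply (elim Lim_transform_eventually)
    apply (auto simp add: eventually_at_right_field intro!: exI[of _ 1])
    done
qed

lemma cpv_integrable:
  fixes f :: "real \<Rightarrow> real"
  assumes "continuous_on {-1..1} f" "\<bar>t\<bar> < 1" "e > 0"
  shows "(\<lambda>s. f s / (s - t)) integrable_on {-1..t-e}"
    and "(\<lambda>s. f s / (s - t)) integrable_on {t+e..1}"
proof -
  show "(\<lambda>s. f s / (s - t)) integrable_on {-1..t-e}"
    apply (rule integrable_continuous_interval)
    apply (rule continuous_on_divide)
    apply (rule continuous_on_subset[OF assms(1)])
    using assms by (auto intro!: continuous_intros)
  show "(\<lambda>s. f s / (s - t)) integrable_on {t+e..1}"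
    apply (rule integrable_continuous_interval)
    apply (rule continuous_on_divide)
    apply (rule continuous_on_subset[OF assms(1)])
    using assms by (auto intro!: continuous_intros)
qed

lemma int_lin:
  fixes F G :: "real \<Rightarrow> real"
  assumes "F integrable_on S" "G integrable_on S"
  shows "integral S (\<lambda>s. a * F s + b * G s) = a * integral S F + b * integral S G"
  by (intro integral_unique has_integral_add has_integral_mult_right integrable_integral assms)

lemma cpv_lin:
  assumes "continuous_on {-1..1} f" "continuous_on {-1..1} g" "\<bar>t\<bar> < 1"
    "has_cpv_integral f t I" "has_cpv_integral g t J"
  shows "has_cpv_integral (\<lambda>s. a * f s + b * g s) t (a * I + b * J)"
proof -
  have eq: "integral {-1..t-e} (\<lambda>s. (a * f s + b * g s) / (s - t)) + integral {t+e..1} (\<lambda>s. (a * f s + b * g s) / (s - t))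
     = a * (integral {-1..t-e} (\<lambda>s. f s / (s - t)) + integral {t+e..1} (\<lambda>s. f s / (s - t)))
     + b * (integral {-1..t-e} (\<lambda>s. g s / (s - t)) + integral {t+e..1} (\<lambda>s. g s / (s - t)))" if "e > 0" for e
  proof -
    have *: "(\<lambda>s. (a * f s + b * g s) / (s - t)) = (\<lambda>s. a * (f s / (s - t)) + b * (g s / (s - t)))"
      by (auto simp: add_divide_distrib)
    show ?thesis unfolding *
      using int_lin[OF cpv_integrable(1)[OF assms(1,3) that] cpv_integrable(1)[OF assms(2,3) that]]
        int_lin[OF cpv_integrable(2)[OF assms(1,3) that] cpv_integrable(2)[OF assms(2,3) that]]
      by (simp add: algebra_simps)
  qed
  have lim: "((\<lambda>e. a * (integral {-1..t-e} (\<lambda>s. f s / (s - t)) + integral {t+e..1} (\<lambda>s. f s / (s - t)))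
     + b * (integral {-1..t-e} (\<lambda>s. g s / (s - t)) + integral {t+e..1} (\<lambda>s. g s / (s - t)))) \<longlongrightarrow> a * I + b * J) (at_right 0)"
    using assms(4,5) unfolding has_cpv_integral_def by (intro tendsto_intros)
  show ?thesis unfolding has_cpv_integral_def
    apply (rule Lim_transform_eventually[OF lim])
    apply (subst eventually_at_right_field) apply (rule exI[of _ 1]) by (simp add: eq)
qed

lemma cpv_zero: "has_cpv_integral (\<lambda>s. 0) t 0"
  unfolding has_cpv_integral_def by simp

lemma cpv_sum:
  assumes "finite A" "\<And>i. i \<in> A \<Longrightarrow> continuous_on {-1..1} (f i)" "\<bar>t\<bar> < 1"
    "\<And>i. i \<in> A \<Longrightarrow> has_cpv_integral (f i) t (I i)"
  shows "has_cpv_integral (\<lambda>s. \<Sum>i\<in>A. c i * f i s) t (\<Sum>i\<in>A. c i * I i)"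
  using assms
proof (induction A rule: finite_induct)
  case empty
  then show ?case by (simp add: cpv_zero)
next
  case (insert x F)
  have "has_cpv_integral (\<lambda>s. c x * f x s + 1 * (\<Sum>i\<in>F. c i * f i s)) t (c x * I x + 1 * (\<Sum>i\<in>F. c i * I i))"
    apply (rule cpv_lin)
    using insert by (auto intro!: continuous_intros)
  then show ?case using insert by simp
qed

lemma cpv_reg:
  assumes "continuous_on {-1..1} g" "\<bar>t\<bar> < 1"
  shows "has_cpv_integral (\<lambda>s. (s - t) * g s) t (integral {-1..1} g)"
proof -
  have gi: "g integrable_on {-1..1}" using assms(1) integrable_continuous_interval by blast
  have eq: "integral {-1..t-e} (\<lambda>s. (s - t) * g s / (s - t)) + integral {t+e..1} (\<lambda>s. (s - t) * g s / (s - t))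
     = integral {-1..t-e} g + integral {t+e..1} g" if "e > 0" for e
  proof -
    have "integral {-1..t-e} (\<lambda>s. (s - t) * g s / (s - t)) = integral {-1..t-e} g"
      by (rule integral_cong) (use that in auto)
    moreover have "integral {t+e..1} (\<lambda>s. (s - t) * g s / (s - t)) = integral {t+e..1} g"
      by (rule integral_cong) (use that in auto)
    ultimately show ?thesis by simp
  qed
  have c1: "isCont (\<lambda>x. integral {-1..x} g) t"
    apply (rule continuous_on_interior[OF indefinite_integral_continuous_1[OF gi]])
    using assms(2) by auto
  have c2: "isCont (\<lambda>x. integral {x..1} g) t"
    apply (rule continuous_on_interior[OF indefinite_integral_continuous_1'[OF gi]])
    using assms(2) by auto
  have l1: "((\<lambda>e. integral {-1..t-e} g) \<longlongrightarrow> integral {-1..t} g) (at_right 0)"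
  proof -
    have "((\<lambda>e. t - e) \<longlongrightarrow> t) (at_right 0)" by (auto intro!: tendsto_eq_intros)
    from isCont_tendsto_compose[OF c1 this] show ?thesis .
  qed
  have l2: "((\<lambda>e. integral {t+e..1} g) \<longlongrightarrow> integral {t..1} g) (at_right 0)"
  proof -
    have "((\<lambda>e. t + e) \<longlongrightarrow> t) (at_right 0)" by (auto intro!: tendsto_eq_intros)
    from isCont_tendsto_compose[OF c2 this] show ?thesis .
  qed
  have comb: "integral {-1..t} g + integral {t..1} g = integral {-1..1} g"
    using Henstock_Kurzweil_Integration.integral_combine[OF _ _ gi, of t] assms(2) by auto
  have lim: "((\<lambda>e. integral {-1..t-e} g + integral {t+e..1} g) \<longlongrightarrow> integral {-1..1} g) (at_right 0)"
    unfolding comb[symmetric] by (intro tendsto_intros l1 l2)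
  show ?thesis unfolding has_cpv_integral_def
    apply (rule Lim_transform_eventually[OF lim])
    apply (subst eventually_at_right_field) apply (rule exI[of _ 1]) using eq by simp
qed

lemma d_arccos:
  assumes "-1 < x" "x < 1"
  shows "(arccos has_real_derivative (-1 / sin (arccos x))) (at x)"
  using DERIV_arccos[OF assms] sin_arccos[of x] assms by (simp add: divide_inverse)

lemma d_sin_arccos:
  assumes "-1 < x" "x < 1"
  shows "((\<lambda>s. sin (a * arccos s)) has_real_derivative (- a * cos (a * arccos x) / sin (arccos x))) (at x)"
  by (rule derivative_eq_intros d_arccos[OF assms] refl)+ simp

lemma d_cos_arccos:
  assumes "-1 < x" "x < 1"
  shows "((\<lambda>s. cos (a * arccos s)) has_real_derivative (a * sin (a * arccos x) / sin (arccos x))) (at x)"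
  by (rule derivative_eq_intros d_arccos[OF assms] refl)+ simp

lemma aux_cancel: "(x::real) \<noteq> 0 \<Longrightarrow> (- x * c / S) / x = - c / S"
  by (cases "S = 0") (simp_all add: field_simps)

lemma F_deriv:
  fixes a x :: real
  assumes x: "-1 < x" "x < 1" and a: "a \<noteq> 1" "a \<noteq> -1"
  shows "((\<lambda>s. (sin ((a+1) * arccos s) / (a+1) - sin ((a-1) * arccos s) / (a-1)) / 2)
          has_real_derivative sin (a * arccos x)) (at x)"
proof -
  define th where "th = arccos x"
  have sn: "sin th \<noteq> 0" unfolding th_def using sin_arccos_nonzero x by auto
  have a1: "a + 1 \<noteq> 0" "a - 1 \<noteq> 0" using a by auto
  have "((\<lambda>s. (sin ((a+1) * arccos s) / (a+1) - sin ((a-1) * arccos s) / (a-1)) / 2)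
          has_real_derivative ((- (a+1) * cos ((a+1) * arccos x) / sin (arccos x)) / (a+1)
            - (- (a-1) * cos ((a-1) * arccos x) / sin (arccos x)) / (a-1)) / 2) (at x)"
    by (intro DERIV_cdivide DERIV_diff d_sin_arccos x)
  moreover have "((- (a+1) * cos ((a+1) * arccos x) / sin (arccos x)) / (a+1)
            - (- (a-1) * cos ((a-1) * arccos x) / sin (arccos x)) / (a-1)) / 2 = sin (a * arccos x)"
  proof -
    have cs: "cos ((a-1) * th) - cos ((a+1) * th) = 2 * sin (a * th) * sin th"
      by (simp add: algebra_simps cos_add cos_diff)
    have gen: "((- (a+1) * c1 / S) / (a+1) - (- (a-1) * c2 / S) / (a-1)) / 2 = (c2 - c1) / (2 * S)" if "S \<noteq> 0" for c1 c2 S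
      unfolding aux_cancel[OF a1(1)] aux_cancel[OF a1(2)] using that by (simp add: field_simps)
    show ?thesis unfolding th_def[symmetric] gen[OF sn] cs using sn
      by simp
  qed
  ultimately show ?thesis by simp
qed

lemma F1_deriv:
  fixes x :: real
  assumes x: "-1 < x" "x < 1"
  shows "((\<lambda>s. (sin (2 * arccos s) / 2 - arccos s) / 2)
          has_real_derivative sin (arccos x)) (at x)"
proof -
  define th where "th = arccos x"
  have sn: "sin th \<noteq> 0" unfolding th_def using sin_arccos_nonzero x by auto
  have "((\<lambda>s. (sin (2 * arccos s) / 2 - arccos s) / 2)
          has_real_derivative ((- 2 * cos (2 * arccos x) / sin (arccos x)) / 2 - (-1 / sin (arccos x))) / 2) (at x)"
    by (intro DERIV_cdivide DERIV_diff d_sin_arccos d_arccos x)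
  moreover have "((- 2 * cos (2 * arccos x) / sin (arccos x)) / 2 - (-1 / sin (arccos x))) / 2 = sin (arccos x)"
  proof -
    have "1 - cos (2 * th) = 2 * sin th * sin th"
      by (simp add: cos_double_sin power2_eq_square)
    then show ?thesis unfolding th_def[symmetric] using sn
      by (simp add: field_simps)
  qed
  ultimately show ?thesis by simp
qed

lemma cont_arccos_fun:
  "continuous_on {-1..1} (\<lambda>s. f (arccos s))" if "continuous_on UNIV f" for f :: "real \<Rightarrow> real"
  using continuous_on_compose[OF continuous_on_arccos' continuous_on_subset[OF that]] by (simp add: o_def)

lemma cont_sin_arccos: "continuous_on {-1..1} (\<lambda>s. sin (c * arccos s))"
  by (rule cont_arccos_fun[of "\<lambda>x. sin (c * x)"]) (intro continuous_intros)

lemma int_sin_arccos: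
  fixes k :: nat
  assumes "k \<ge> 1"
  shows "((\<lambda>s. sin (real k * arccos s)) has_integral (if k = 1 then pi/2 else 0)) {-1..1}"
proof (cases "k = 1")
  case True
  have "((\<lambda>s. sin (arccos s)) has_integral
      ((\<lambda>s. (sin (2 * arccos s) / 2 - arccos s) / 2) 1 - (\<lambda>s. (sin (2 * arccos s) / 2 - arccos s) / 2) (-1))) {-1..1}"
    apply (rule fundamental_theorem_of_calculus_interior)
      apply simp
     apply (intro continuous_on_divide continuous_on_diff cont_sin_arccos continuous_on_arccos' continuous_on_const; simp)
    apply (subst has_real_derivative_iff_has_vector_derivative[symmetric])
    apply (rule F1_deriv) by auto
  then show ?thesis using True by simp
next
  case False
  define a where "a = real k"
  have a: "a \<noteq> 1" "a \<noteq> -1" using False unfolding a_def by auto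
  let ?F = "\<lambda>s. (sin ((a+1) * arccos s) / (a+1) - sin ((a-1) * arccos s) / (a-1)) / 2"
  have "((\<lambda>s. sin (a * arccos s)) has_integral (?F 1 - ?F (-1))) {-1..1}"
    apply (rule fundamental_theorem_of_calculus_interior)
      apply simp
     apply (intro continuous_on_divide continuous_on_diff cont_sin_arccos continuous_on_const; use a in simp)
    apply (subst has_real_derivative_iff_has_vector_derivative[symmetric])
    apply (rule F_deriv[OF _ _ a]) by auto
  moreover have "?F 1 - ?F (-1) = 0"
  proof -
    have s1: "sin ((a+1) * pi) = 0" using sin_npi[of "k+1"] unfolding a_def by (simp add: add.commute)
    have s2: "sin ((a-1) * pi) = 0" using sin_npi[of "k-1"] assms unfolding a_def by (simp add: of_nat_diff)
    show ?thesis by (simp add: s1 s2)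
  qed
  ultimately show ?thesis using False unfolding a_def by simp
qed

lemma alg:
  fixes x t u w :: real
  assumes w2: "w^2 = 1 - x^2" and u2: "u^2 = 1 - t^2" and wn: "w \<noteq> 0" and xt: "x - t \<noteq> 0"
    and D: "1 - t * x + u * w \<noteq> 0"
  shows "- x / w - t / w + u * (2 * (x - t) / (x - t)^2 / 2) - u * ((- t - u * x / w) / (1 - t * x + u * w))
     = w / (x - t)"
proof -
  define DD where "DD = 1 - t * x + u * w"
  have DD: "DD \<noteq> 0" using D DD_def by simp
  define Q where "Q = w * (x - t) * DD"
  have Q: "Q \<noteq> 0" using wn xt DD Q_def by simp
  have e1: "2 * (x - t) / (x - t)^2 / 2 = 1 / (x - t)" using xt by (simp add: power2_eq_square divide_simps)
  have e2: "(- t - u * x / w) / DD = - ((t * w + u * x) / (w * DD))" using wn DD by (simp add: field_simps)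
  have lhs: "- x / w - t / w + u * (2 * (x - t) / (x - t)^2 / 2) - u * ((- t - u * x / w) / DD)
     = (- (x + t)) / w + u / (x - t) + u * (t * w + u * x) / (w * DD)"
    unfolding e1 e2 using wn DD by (simp add: field_simps)
  have f1: "((- (x + t)) / w) * Q = - (x + t) * (x - t) * DD" unfolding Q_def using wn by simp
  have f2: "(u / (x - t)) * Q = u * w * DD" unfolding Q_def using xt by simp
  have f3: "(u * (t * w + u * x) / (w * DD)) * Q = u * (t * w + u * x) * (x - t)" unfolding Q_def using wn DD by simp
  have key: "-(x+t) * (x - t) * DD + u * w * DD + u * (t * w + u * x) * (x - t)
      = w * w * DD"
    unfolding DD_def using w2 u2 by algebra
  have "((- (x + t)) / w + u / (x - t) + u * (t * w + u * x) / (w * DD)) * Q = w * w * DD"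
    unfolding distrib_right f1 f2 f3 key[symmetric] by simp
  then have "(- (x + t)) / w + u / (x - t) + u * (t * w + u * x) / (w * DD) = w * w * DD / Q"
    using Q by (simp add: eq_divide_eq)
  also have "\<dots> = w / (x - t)" unfolding Q_def using wn DD xt by simp
  finally show ?thesis using lhs unfolding DD_def by simp
qed
lemma cpv_base:
  fixes t :: real
  assumes t: "\<bar>t\<bar> < 1"
  shows "has_cpv_integral (\<lambda>s. sin (arccos s)) t (- pi * t)"
proof -
  define u where "u = sqrt (1 - t^2)"
  have t2: "t^2 < 1" using t by (simp add: abs_square_less_1)
  have u2: "u^2 = 1 - t^2" unfolding u_def by (rule real_sqrt_pow2) (use t2 in simp)
  have u0: "u \<ge> 0" unfolding u_def using t2 by simp
  have pos: "1 - t * s + u * sqrt (1 - s^2) > 0" if "s \<in> {-1..1}" for s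
  proof -
    have "\<bar>t\<bar> * \<bar>s\<bar> \<le> \<bar>t\<bar> * 1" by (rule mult_left_mono) (use that in auto)
    then have ts: "\<bar>t * s\<bar> < 1" using t by (simp add: abs_mult)
    have "s^2 \<le> 1" using that by (simp add: abs_square_le_1 abs_le_iff)
    then have "u * sqrt (1 - s^2) \<ge> 0" using u0 by simp
    then show ?thesis using ts by linarith
  qed
  define C where "C s = sqrt (1 - s^2) + t * arccos s - u * ln (1 - t * s + u * sqrt (1 - s^2))" for s
  define L where "L s = ln ((s - t)^2) / 2" for s
  define F where "F s = C s + u * L s" for s
  have contC: "continuous_on {-1..1} C"
    unfolding C_def
    apply (intro continuous_intros continuous_on_arccos')
    using pos by fastforce+
  have contL: "continuous_on S L" if "\<And>s. s \<in> S \<Longrightarrow> s \<noteq> t" for S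
    unfolding L_def apply (intro continuous_intros) using that by auto
  have contF: "continuous_on S F" if "S \<subseteq> {-1..1}" "\<And>s. s \<in> S \<Longrightarrow> s \<noteq> t" for S
    unfolding F_def by (intro continuous_intros continuous_on_subset[OF contC] contL that)
  have derF: "(F has_real_derivative (sin (arccos x) / (x - t))) (at x)" if x: "-1 < x" "x < 1" "x \<noteq> t" for x
  proof -
    define w where "w = sqrt (1 - x^2)"
    have x2: "x^2 < 1" using x by (simp add: abs_square_less_1)
    have w2: "w^2 = 1 - x^2" unfolding w_def by (rule real_sqrt_pow2) (use x2 in simp)
    have wp: "w > 0" unfolding w_def using x by (simp add: abs_square_less_1)
    have sw: "sin (arccos x) = w" unfolding w_def using x by (simp add: sin_arccos)
    have Dp: "1 - t * x + u * w > 0" unfolding w_def using pos x by auto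
    have d1: "((\<lambda>s. sqrt (1 - s^2)) has_real_derivative (- x / w)) (at x)"
      unfolding w_def using x x2
      by (auto intro!: derivative_eq_intros simp: divide_simps)
    have d2: "(arccos has_real_derivative (- 1 / w)) (at x)" using d_arccos[OF x(1,2)] sw by simp
    have d3: "((\<lambda>s. ln (1 - t * s + u * sqrt (1 - s^2))) has_real_derivative ((- t - u * x / w) / (1 - t * x + u * w))) (at x)"
    proof -
      have inner: "((\<lambda>s. 1 - t * s + u * sqrt (1 - s^2)) has_real_derivative (- t - u * x / w)) (at x)"
        using DERIV_add[OF DERIV_diff[OF DERIV_const[of 1] DERIV_cmult[OF DERIV_ident, of t]] DERIV_cmult[OF d1, of u]]
        by simp
      have "1 - t * x + u * sqrt (1 - x^2) > 0" using Dp unfolding w_def .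
      from DERIV_chain2[OF DERIV_ln[OF this] inner] show ?thesis
        by (simp add: w_def divide_inverse mult.commute)
    qed
    have d4: "(L has_real_derivative (2 * (x - t) / (x - t)^2 / 2)) (at x)"
      unfolding L_def using x
      by (auto intro!: derivative_eq_intros simp: divide_simps)
    have "(F has_real_derivative (- x / w + t * (- 1 / w) - u * ((- t - u * x / w) / (1 - t * x + u * w)) + u * (2 * (x - t) / (x - t)^2 / 2))) (at x)"
      unfolding F_def[abs_def] C_def
      by (intro DERIV_add DERIV_diff DERIV_cmult d1 d2 d3 d4)
    moreover have "- x / w + t * (- 1 / w) - u * ((- t - u * x / w) / (1 - t * x + u * w)) + u * (2 * (x - t) / (x - t)^2 / 2) = w / (x - t)"
    proof -
      have "- x / w - t / w + u * (2 * (x - t) / (x - t)^2 / 2) - u * ((- t - u * x / w) / (1 - t * x + u * w)) = w / (x - t)"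
        by (rule alg[OF w2 u2]) (use wp x Dp in auto)
      then show ?thesis by simp
    qed
    ultimately show ?thesis using sw by simp
  qed
  have F1: "F 1 = 0"
  proof -
    have "ln ((1 - t)^2) = 2 * ln (1 - t)" using t by (subst ln_realpow) auto
    then show ?thesis unfolding F_def C_def L_def by simp
  qed
  have Fm1: "F (-1) = t * pi"
  proof -
    have "ln ((-1 - t)^2) = 2 * ln (1 + t)"
    proof -
      have "(-1 - t)^2 = (1 + t)^2" by (simp add: power2_eq_square algebra_simps)
      then show ?thesis using t by (simp add: ln_realpow)
    qed
    then show ?thesis unfolding F_def C_def L_def by simp
  qed
  have eq: "integral {-1..t-e} (\<lambda>s. sin (arccos s) / (s - t)) + integral {t+e..1} (\<lambda>s. sin (arccos s) / (s - t))
      = - pi * t + (C (t - e) - C (t + e))" if e: "0 < e" "e < 1 - \<bar>t\<bar>" for e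
  proof -
    have "((\<lambda>s. sin (arccos s) / (s - t)) has_integral (F (t - e) - F (-1))) {-1..t-e}"
      apply (rule fundamental_theorem_of_calculus_interior)
        apply (use e in simp)
       apply (rule contF) apply (use e in auto)[2]
      apply (subst has_real_derivative_iff_has_vector_derivative[symmetric])
      apply (rule derF) using e by auto
    moreover have "((\<lambda>s. sin (arccos s) / (s - t)) has_integral (F 1 - F (t + e))) {t+e..1}"
      apply (rule fundamental_theorem_of_calculus_interior)
        apply (use e in simp)
       apply (rule contF) apply (use e in auto)[2]
      apply (subst has_real_derivative_iff_has_vector_derivative[symmetric])
      apply (rule derF) using e by auto
    moreover have "L (t - e) = L (t + e)" unfolding L_def by (simp add: power2_eq_square)
    ultimately show ?thesis using F1 Fm1 unfolding F_def by (simp add: integral_unique algebra_simps)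
  qed
  have cC: "isCont C t"
    by (rule continuous_on_interior[OF contC]) (use t in auto)
  have l1: "((\<lambda>e. C (t - e)) \<longlongrightarrow> C t) (at_right 0)"
  proof -
    have "((\<lambda>e. t - e) \<longlongrightarrow> t) (at_right 0)" by (auto intro!: tendsto_eq_intros)
    from isCont_tendsto_compose[OF cC this] show ?thesis .
  qed
  have l2: "((\<lambda>e. C (t + e)) \<longlongrightarrow> C t) (at_right 0)"
  proof -
    have "((\<lambda>e. t + e) \<longlongrightarrow> t) (at_right 0)" by (auto intro!: tendsto_eq_intros)
    from isCont_tendsto_compose[OF cC this] show ?thesis .
  qed
  have lim: "((\<lambda>e. - pi * t + (C (t - e) - C (t + e))) \<longlongrightarrow> - pi * t) (at_right 0)"
    using tendsto_add[OF tendsto_const[of "- pi * t"] tendsto_diff[OF l1 l2]] by simp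
  show ?thesis unfolding has_cpv_integral_def
    apply (rule Lim_transform_eventually[OF lim])
    apply (subst eventually_at_right_field) apply (rule exI[of _ "1 - \<bar>t\<bar>"]) using eq t by simp
qed

lemma cos_rec: fixes c x :: real shows "cos ((c + 2) * x) = 2 * cos x * cos ((c + 1) * x) - cos (c * x)"
proof -
  have "cos ((c + 2) * x) = cos ((c + 1) * x + x)" "cos (c * x) = cos ((c + 1) * x - x)"
    by (simp_all add: algebra_simps)
  then show ?thesis by (simp add: cos_add cos_diff)
qed

lemma sin_rec: fixes c x :: real shows "sin ((c + 2) * x) = 2 * cos x * sin ((c + 1) * x) - sin (c * x)"
proof -
  have "sin ((c + 2) * x) = sin ((c + 1) * x + x)" "sin (c * x) = sin ((c + 1) * x - x)"
    by (simp_all add: algebra_simps)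
  then show ?thesis by (simp add: sin_add sin_diff)
qed

lemma cpv_sin:
  fixes t :: real
  assumes t: "\<bar>t\<bar> < 1"
  shows "has_cpv_integral (\<lambda>s. sin (real k * arccos s)) t (if k = 0 then 0 else - pi * cos (real k * arccos t))"
proof -
  let ?P = "\<lambda>k. has_cpv_integral (\<lambda>s. sin (real k * arccos s)) t (if k = 0 then 0 else - pi * cos (real k * arccos t))"
  have ct: "cos (arccos t) = t" using t by (simp add: cos_arccos_abs less_imp_le)
  have "?P k \<and> ?P (Suc k)" for k
  proof (induction k)
    case 0
    have "?P 0" using cpv_zero[of t] by simp
    moreover have "?P 1" using cpv_base[OF t] ct by simp
    ultimately show ?case by simp
  next
    case (Suc k)
    have Pk: "?P k" and Pk1': "?P (Suc k)" using Suc by auto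
    have Pk1: "has_cpv_integral (\<lambda>s. sin (real (Suc k) * arccos s)) t (- pi * cos (real (Suc k) * arccos t))"
      using Pk1' by (simp only: nat.distinct if_False)
    define g where "g s = 2 * sin (real (Suc k) * arccos s)" for s
    have cg: "continuous_on {-1..1} g" unfolding g_def by (intro continuous_intros cont_sin_arccos)
    have ig: "integral {-1..1} g = (if k = 0 then pi else 0)"
    proof -
      have "(g has_integral 2 * (if Suc k = 1 then pi/2 else 0)) {-1..1}"
        unfolding g_def by (intro has_integral_mult_right int_sin_arccos) simp
      then show ?thesis by (simp add: integral_unique)
    qed
    have A: "has_cpv_integral (\<lambda>s. (s - t) * g s) t (if k = 0 then pi else 0)"
      using cpv_reg[OF cg t] ig by simp
    have B: "has_cpv_integral (\<lambda>s. (2 * t) * sin (real (Suc k) * arccos s) + (-1) * sin (real k * arccos s)) t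
              ((2 * t) * (- pi * cos (real (Suc k) * arccos t)) + (-1) * (if k = 0 then 0 else - pi * cos (real k * arccos t)))"
      by (rule cpv_lin[OF cont_sin_arccos cont_sin_arccos t Pk1 Pk])
    have C: "has_cpv_integral (\<lambda>s. 1 * ((s - t) * g s) + 1 * ((2 * t) * sin (real (Suc k) * arccos s) + (-1) * sin (real k * arccos s))) t
              (1 * (if k = 0 then pi else 0) + 1 * ((2 * t) * (- pi * cos (real (Suc k) * arccos t)) + (-1) * (if k = 0 then 0 else - pi * cos (real k * arccos t))))"
      apply (rule cpv_lin[OF _ _ t A B])
      unfolding g_def by (auto intro!: continuous_intros)
    have val: "1 * (if k = 0 then pi else 0) + 1 * ((2 * t) * (- pi * cos (real (Suc k) * arccos t)) + (-1) * (if k = 0 then 0 else - pi * cos (real k * arccos t)))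
        = - pi * cos (real (Suc (Suc k)) * arccos t)"
    proof -
      have r: "cos (real (Suc (Suc k)) * arccos t) = 2 * t * cos (real (Suc k) * arccos t) - cos (real k * arccos t)"
        using cos_rec[of "real k" "arccos t"] ct by (simp add: algebra_simps)
      show ?thesis unfolding r by (cases "k = 0") (simp_all add: algebra_simps ct)
    qed
    have fq: "1 * ((s - t) * g s) + 1 * ((2 * t) * sin (real (Suc k) * arccos s) + (-1) * sin (real k * arccos s))
        = sin (real (Suc (Suc k)) * arccos s)" if "s \<in> {-1..1}" for s
    proof -
      have "cos (arccos s) = s" using that by (simp add: cos_arccos)
      then show ?thesis using sin_rec[of "real k" "arccos s"] unfolding g_def
        by (simp add: algebra_simps)
    qed
    have "?P (Suc (Suc k))"
      using cpv_cong[OF fq C[unfolded val] t] by simp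
    then show ?case using Pk1' by simp
  qed
  then show ?thesis by simp
qed

lemma one_minus_cis2: "1 - cis (2 * x) = cis x * (- 2 * \<i> * complex_of_real (sin x))"
proof -
  have a: "cos (x*2) = 1 - 2 * sin x * sin x" "sin (x*2) = 2 * sin x * cos x"
    using cos_double_sin[of x] sin_double[of x] by (simp_all add: power2_eq_square mult.commute)
  show ?thesis unfolding complex_eq_iff by (simp add: a algebra_simps)
qed

lemma binom_cis:
  fixes c x :: real
  shows "(\<Sum>j\<le>p. (-1)^j * of_nat (p choose j) * cis ((c + 2 * real j) * x))
       = cis ((c + real p) * x) * (- 2 * \<i> * complex_of_real (sin x))^p"
proof -
  have "(\<Sum>j\<le>p. (-1)^j * of_nat (p choose j) * cis ((c + 2 * real j) * x))
      = cis (c * x) * (\<Sum>j\<le>p. of_nat (p choose j) * (- cis (2 * x))^j * 1^(p - j))"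
    unfolding sum_distrib_left
  proof (rule sum.cong[OF refl])
    fix j assume "j \<in> {..p}"
    have "cis (c * x) * cis (2 * x) ^ j = cis (c * x + real j * (2 * x))"
      by (subst Complex.DeMoivre, subst cis_mult, rule refl)
    also have "c * x + real j * (2 * x) = (c + 2 * real j) * x" by (simp add: algebra_simps)
    finally have H: "cis ((c + 2 * real j) * x) = cis (c * x) * cis (2 * x) ^ j" by simp
    show "(-1)^j * of_nat (p choose j) * cis ((c + 2 * real j) * x)
        = cis (c * x) * (of_nat (p choose j) * (- cis (2 * x))^j * 1^(p - j))"
      unfolding H power_minus[of "cis (2 * x)"] power_one mult_1_right by (simp only: mult_ac)
  qed
  also have "\<dots> = cis (c * x) * (1 - cis (2 * x))^p"
    by (subst binomial_ring[symmetric]) simp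
  also have "\<dots> = cis (c * x) * (cis x ^ p * (- 2 * \<i> * complex_of_real (sin x))^p)"
    unfolding one_minus_cis2 by (rule arg_cong[where f = "\<lambda>z. cis (c * x) * z"], rule power_mult_distrib)
  also have "\<dots> = (cis (c * x) * cis (real p * x)) * (- 2 * \<i> * complex_of_real (sin x))^p"
    unfolding Complex.DeMoivre by (rule mult.assoc[symmetric])
  also have "\<dots> = cis ((c + real p) * x) * (- 2 * \<i> * complex_of_real (sin x))^p"
    unfolding cis_mult by (simp add: distrib_right)
  finally show ?thesis .
qed

lemma pow_m2i:
  assumes "m \<ge> 1"
  shows "(- 2 * \<i>) ^ (2 * m - 1) = complex_of_real ((-1)^m * 2^(2*m-1)) * \<i>"
proof -
  obtain q where q: "m = Suc q" using assms by (cases m) auto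
  have "2 * m - 1 = 2 * q + 1" using q by simp
  then have "(- 2 * \<i>) ^ (2 * m - 1) = ((- 2 * \<i>)^2)^q * (- 2 * \<i>)"
    by (simp add: power_mult power_add)
  also have "\<dots> = (-4)^q * (- 2 * \<i>)" by (simp add: power2_eq_square)
  also have "\<dots> = complex_of_real ((-1)^m * 2^(2*m-1)) * \<i>"
  proof -
    have "(-4::complex)^q = (-1)^q * 2^(2*q)" by (simp add: power_mult power_mult_distrib[symmetric])
    then show ?thesis unfolding q \<open>2 * m - 1 = 2 * q + 1\<close>[unfolded q] by (simp add: algebra_simps)
  qed
  finally show ?thesis .
qed

lemma trig_expand:
  fixes x :: real and m n :: nat
  assumes "m \<ge> 1" "n \<ge> 2 * m"
  shows "cos (real n * x) * sin x ^ (2 * m - 1)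
     = (\<Sum>j=0..2*m-1. (1/2)^(2*m-1) * (-1)^m * ((-1)^j * real ((2*m-1) choose j)) * sin (real (n - 2*m + 2*j + 1) * x))"
proof -
  define p where "p = 2 * m - 1"
  define c where "c = real (n - 2*m + 1)"
  have cp: "c + real p = real n" unfolding c_def p_def using assms by (simp add: of_nat_diff)
  have kj: "real (n - 2*m + 2*j + 1) = c + 2 * real j" for j unfolding c_def using assms by simp
  have "Im (\<Sum>j\<le>p. (-1)^j * of_nat (p choose j) * cis ((c + 2 * real j) * x))
      = (\<Sum>j\<le>p. (-1)^j * real (p choose j) * sin ((c + 2 * real j) * x))"
    by (simp add: Im_sum)
  moreover have "Im (cis ((c + real p) * x) * (- 2 * \<i> * complex_of_real (sin x))^p)
      = (-1)^m * 2^(2*m-1) * sin x ^ p * cos (real n * x)"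
  proof -
    have "(- 2 * \<i> * complex_of_real (sin x))^p = complex_of_real ((-1)^m * 2^(2*m-1) * sin x ^ p) * \<i>"
    proof -
      have "(- 2 * \<i> * complex_of_real (sin x))^p = (- 2 * \<i>)^p * complex_of_real (sin x) ^ p"
        by (rule power_mult_distrib)
      then show ?thesis unfolding p_def pow_m2i[OF assms(1)] by (simp add: algebra_simps)
    qed
    then show ?thesis unfolding cp by simp
  qed
  ultimately have main: "(\<Sum>j\<le>p. (-1)^j * real (p choose j) * sin ((c + 2 * real j) * x))
      = (-1)^m * 2^(2*m-1) * sin x ^ p * cos (real n * x)"
    using binom_cis[of p c x] by simp
  have "(\<Sum>j=0..2*m-1. (1/2)^(2*m-1) * (-1)^m * ((-1)^j * real ((2*m-1) choose j)) * sin (real (n - 2*m + 2*j + 1) * x))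
      = (1/2)^p * (-1)^m * (\<Sum>j\<le>p. (-1)^j * real (p choose j) * sin ((c + 2 * real j) * x))"
    unfolding sum_distrib_left p_def[symmetric] kj atLeast0AtMost by (simp add: algebra_simps)
  also have "\<dots> = (1/2)^p * (-1)^m * ((-1)^m * 2^(2*m-1) * sin x ^ p * cos (real n * x))"
    by (simp only: main)
  also have "\<dots> = ((1/2)^p * 2^p) * ((-1)^m * (-1)^m) * (sin x ^ p * cos (real n * x))"
    unfolding p_def by (simp only: mult_ac)
  also have "\<dots> = cos (real n * x) * sin x ^ p"
    by (simp add: power_mult_distrib[symmetric] power_add[symmetric])
  finally show ?thesis unfolding p_def by simp
qed

lemma powr_eq:
  fixes s :: real
  assumes s: "s \<in> {-1..1}" and m: "m \<ge> 1"
  shows "(1 - s^2) powr (real m - 1/2) = sin (arccos s) ^ (2 * m - 1)"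
proof -
  have s2: "s^2 \<le> 1" using s by (simp add: abs_square_le_1 abs_le_iff)
  have sa: "sin (arccos s) = sqrt (1 - s^2)" using s by (simp add: sin_arccos)
  show ?thesis
  proof (cases "1 - s^2 = 0")
    case True
    then show ?thesis unfolding sa using m by simp
  next
    case False
    then have pos: "1 - s^2 > 0" using s2 by simp
    have "sqrt (1 - s^2) ^ (2 * m - 1) = ((1 - s^2) powr (1/2)) powr real (2 * m - 1)"
      using pos by (simp add: powr_half_sqrt powr_realpow)
    also have "\<dots> = (1 - s^2) powr (real m - 1/2)"
      unfolding powr_powr using m by (simp add: of_nat_diff algebra_simps)
    finally show ?thesis unfolding sa by simp
  qed
qed

theorem mainTheorem3:
  fixes m n :: nat and r :: real
  assumes "m \<ge> 1" and "n \<ge> 2*m + 1" and "\<bar>r\<bar> < 1"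
  shows "has_hadamard2_integral
           (\<lambda>s. chebT n s * (1 - s^2) powr (real m - 1/2)) r
           (pi * (-1)^(m+1) * (1/2)^(2*m-1) *
             (\<Sum>j=0..2*m-1. (-1)^j * real ((2*m-1) choose j)
                 * real (n + 1 - 2*m + 2*j) * chebU (n - 2*m + 2*j) r))"
proof -
  define c where "c j = (1/2)^(2*m-1) * (-1)^m * ((-1)^j * real ((2*m-1) choose j))" for j :: nat
  define k where "k j = n - 2*m + 2*j + 1" for j :: nat
  define A where "A = {0..2*m-1}"
  define P where "P t = (\<Sum>j\<in>A. c j * (- pi * cos (real (k j) * arccos t)))" for t
  have Deq: "chebT n s * (1 - s^2) powr (real m - 1/2) = (\<Sum>j\<in>A. c j * sin (real (k j) * arccos s))"
    if "s \<in> {-1..1}" for s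
  proof -
    have "n \<ge> 2 * m" using assms(2) by simp
    from trig_expand[OF assms(1) this, of "arccos s"] show ?thesis
      unfolding chebT_def powr_eq[OF that assms(1)] A_def c_def k_def .
  qed
  have cpv: "has_cpv_integral (\<lambda>s. chebT n s * (1 - s^2) powr (real m - 1/2)) t (P t)"
    if t: "t \<in> {-1<..<1}" for t
  proof -
    have t1: "\<bar>t\<bar> < 1" using t by auto
    have "has_cpv_integral (\<lambda>s. \<Sum>j\<in>A. c j * sin (real (k j) * arccos s)) t (P t)"
      unfolding P_def
    proof (rule cpv_sum[OF _ _ t1])
      show "finite A" unfolding A_def by simp
      show "continuous_on {-1..1} (\<lambda>s. sin (real (k j) * arccos s))" for j by (rule cont_sin_arccos)
      show "has_cpv_integral (\<lambda>s. sin (real (k j) * arccos s)) t (- pi * cos (real (k j) * arccos t))" for j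
        using cpv_sin[OF t1, of "k j"] unfolding k_def by simp
    qed
    then show ?thesis by (rule cpv_cong[rotated]) (use Deq t1 in auto)
  qed
  have der: "(P has_real_derivative (\<Sum>j\<in>A. c j * (- pi * (real (k j) * sin (real (k j) * arccos r) / sin (arccos r))))) (at r)"
    unfolding P_def[abs_def]
    apply (rule DERIV_sum)
    apply (intro DERIV_cmult d_cos_arccos)
    using assms(3) by auto
  have val: "(\<Sum>j\<in>A. c j * (- pi * (real (k j) * sin (real (k j) * arccos r) / sin (arccos r))))
     = pi * (-1)^(m+1) * (1/2)^(2*m-1) *
             (\<Sum>j=0..2*m-1. (-1)^j * real ((2*m-1) choose j)
                 * real (n + 1 - 2*m + 2*j) * chebU (n - 2*m + 2*j) r)"
    unfolding sum_distrib_left A_def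
  proof (rule sum.cong[OF refl])
    fix j
    have kk: "k j = n + 1 - 2*m + 2*j" "n - 2*m + 2*j + 1 = k j" unfolding k_def using assms(2) by auto
    show "c j * (- pi * (real (k j) * sin (real (k j) * arccos r) / sin (arccos r)))
      = pi * (-1)^(m+1) * (1/2)^(2*m-1) * ((-1)^j * real ((2*m-1) choose j) * real (n + 1 - 2*m + 2*j) * chebU (n - 2*m + 2*j) r)"
      unfolding chebU_def kk(2) kk(1)[symmetric] c_def by (simp add: algebra_simps)
  qed
  show ?thesis unfolding has_hadamard2_integral_def
    apply (rule exI[of _ P])
    using cpv der[unfolded val] by blast
qed

end
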